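(* Let $s=0$ and $\lambda\in\mathbb{C}$. The space of even superderivations of $\mathfrak{L}^0_\lambda$ of degree $0$ equals $$\mathrm{span}_{\mathbb{C}}\{\mathrm{ad}\,L_0,\ \mathrm{ad}\,I_0\}\oplus\mathbb{C}\,\partial_G\oplus\delta_{\lambda,0}\,\mathbb{C}\,\partial_D,$$ where the last summand is $\mathbb{C}\partial_D$ if $\lambda=0$ and $\{0\}$ if $\lambda\neq0$. In particular $\partial_G$ is a superderivation for every $\lambda$, and $\partial_D$ is a superderivation when $\lambda=0$.
   Context: For $s\in\{0,\tfrac12\}$ and $\lambda\in\mathbb{C}$, $\mathfrak{L}^s_\lambda$ is the complex Lie superalgebra with basis $\{L_m,I_m,G_p,H_p : m\in\mathbb{Z},\ p\in s+\mathbb{Z}\}$, even part spanned by the $L_m,I_m$, odd part spanned by the $G_p,H_p$, and brackets $[L_m,L_n]=(m-n)L_{m+n}$, $[L_m,I_n]=(m-n)I_{m+n}$, $[L_m,H_p]=(\tfrac m2-p)H_{m+p}$, $[L_m,G_p]=(\tfrac m2-p)G_{m+p}+\lambda(m+1)H_{m+p}$, $[I_m,G_p]=(m-2p)H_{m+p}$, $[G_p,G_q]=I_{p+q}$, plus those given by super-antisymmetry $[y,x]=-(-1)^{|x||y|}[x,y]$; all other brackets of basis elements are zero. $\mathfrak{L}_r$ is spanned by basis elements of index $r$. A superderivation of parity $a$ is a linear map $D$ shifting parity by $a$ with $D([x,y])=[D(x),y]+(-1)^{a|x|}[x,D(y)]$; it has degree $r$ if $D(\mathfrak{L}_q)\subset\mathfrak{L}_{q+r}$.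 $\mathrm{ad}\,x(y)=[x,y]$. The linear maps $\partial_G,\partial_D$ are defined by $\partial_G(L_m)=\partial_G(I_m)=\partial_G(H_p)=0$, $\partial_G(G_p)=H_p$; $\partial_D(L_m)=0$, $\partial_D(I_m)=2I_m$, $\partial_D(G_p)=G_p$, $\partial_D(H_p)=3H_p$. *)

theory Defs
  imports Complex_Main
begin

text \<open>Basis of the Lie superalgebra L^0_lambda (s = 0, so all indices are integers).\<close>
datatype basis = L int | I int | G int | H int

type_synonym elt = "basis \<Rightarrow> complex"

definition supp :: "elt \<Rightarrow> basis set" where
  "supp x = {b. x b \<noteq> 0}"

definition carrierV :: "elt set" where
  "carrierV = {x. finite (supp x)}"

definition e :: "basis \<Rightarrow> elt" where
  "e b = (\<lambda>c. if c = b then 1 else 0)"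

definition parity :: "basis \<Rightarrow> nat" where
  "parity b = (case b of L _ \<Rightarrow> 0 | I _ \<Rightarrow> 0 | G _ \<Rightarrow> 1 | H _ \<Rightarrow> 1)"

definition idx :: "basis \<Rightarrow> int" where
  "idx b = (case b of L m \<Rightarrow> m | I m \<Rightarrow> m | G p \<Rightarrow> p | H p \<Rightarrow> p)"

definition addv :: "elt \<Rightarrow> elt \<Rightarrow> elt" (infixl "\<oplus>" 65) where
  "addv x y = (\<lambda>b. x b + y b)"

definition scal :: "complex \<Rightarrow> elt \<Rightarrow> elt" where
  "scal c x = (\<lambda>b. c * x b)"

fun brb :: "complex \<Rightarrow> basis \<Rightarrow> basis \<Rightarrow> elt" where
  "brb lam (L m) (L n) = scal (of_int (m - n)) (e (L (m + n)))"
| "brb lam (L m) (I n) = scal (of_int (m - n)) (e (I (m + n)))"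
| "brb lam (I n) (L m) = scal (- of_int (m - n)) (e (I (m + n)))"
| "brb lam (L m) (H p) = scal (of_int m / 2 - of_int p) (e (H (m + p)))"
| "brb lam (H p) (L m) = scal (- (of_int m / 2 - of_int p)) (e (H (m + p)))"
| "brb lam (L m) (G p) = scal (of_int m / 2 - of_int p) (e (G (m + p)))
                         \<oplus> scal (lam * of_int (m + 1)) (e (H (m + p)))"
| "brb lam (G p) (L m) = scal (- (of_int m / 2 - of_int p)) (e (G (m + p)))
                         \<oplus> scal (- (lam * of_int (m + 1))) (e (H (m + p)))"
| "brb lam (I m) (G p) = scal (of_int (m - 2 * p)) (e (H (m + p)))"
| "brb lam (G p) (I m) = scal (- of_int (m - 2 * p)) (e (H (m + p)))"
| "brb lam (G p) (G q) = e (I (p + q))"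
| "brb lam _ _ = (\<lambda>_. 0)"

definition bracket :: "complex \<Rightarrow> elt \<Rightarrow> elt \<Rightarrow> elt" where
  "bracket lam x y = (\<lambda>c. \<Sum>b1\<in>supp x. \<Sum>b2\<in>supp y. x b1 * y b2 * brb lam b1 b2 c)"

definition ad :: "complex \<Rightarrow> elt \<Rightarrow> elt \<Rightarrow> elt" where
  "ad lam x = bracket lam x"

definition dG :: "elt \<Rightarrow> elt" where
  "dG x = (\<lambda>c. case c of H p \<Rightarrow> x (G p) | _ \<Rightarrow> 0)"

definition dD :: "elt \<Rightarrow> elt" where
  "dD x = (\<lambda>c. case c of L _ \<Rightarrow> 0 | I _ \<Rightarrow> 2 * x c | G _ \<Rightarrow> x c | H _ \<Rightarrow> 3 * x c)"

definition is_linear :: "(elt \<Rightarrow> elt) \<Rightarrow> bool" where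
  "is_linear D \<longleftrightarrow> (\<forall>x\<in>carrierV. D x \<in> carrierV) \<and>
     (\<forall>x\<in>carrierV. \<forall>y\<in>carrierV. D (x \<oplus> y) = D x \<oplus> D y) \<and>
     (\<forall>c. \<forall>x\<in>carrierV. D (scal c x) = scal c (D x))"

definition of_parity :: "nat \<Rightarrow> elt \<Rightarrow> bool" where
  "of_parity a x \<longleftrightarrow> (\<forall>b. x b \<noteq> 0 \<longrightarrow> parity b = a)"

definition of_index :: "int \<Rightarrow> elt \<Rightarrow> bool" where
  "of_index q x \<longleftrightarrow> (\<forall>b. x b \<noteq> 0 \<longrightarrow> idx b = q)"

text \<open>Even superderivation (parity 0: the sign factor is 1, D preserves parity).\<close>
definition even_superder :: "complex \<Rightarrow> (elt \<Rightarrow> elt) \<Rightarrow> bool" where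
  "even_superder lam D \<longleftrightarrow> is_linear D \<and>
     (\<forall>a x. x \<in> carrierV \<longrightarrow> of_parity a x \<longrightarrow> of_parity a (D x)) \<and>
     (\<forall>x\<in>carrierV. \<forall>y\<in>carrierV.
        D (bracket lam x y) = bracket lam (D x) y \<oplus> bracket lam x (D y))"

definition has_degree :: "int \<Rightarrow> (elt \<Rightarrow> elt) \<Rightarrow> bool" where
  "has_degree r D \<longleftrightarrow> (\<forall>q x. x \<in> carrierV \<longrightarrow> of_index q x \<longrightarrow> of_index (q + r) (D x))"

end

theory Submission
  imports Defs
begin


lemma e_apply[simp]: "e b c = (if c = b then 1 else 0)" by (simp add: e_def)
lemma scal_apply[simp]: "scal k x c = k * x c" by (simp add: scal_def)
lemma addv_apply[simp]: "(x \<oplus> y) c = x c + y c" by (simp add: addv_def)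

lemma supp_e[simp]: "supp (e b) = {b}" by (auto simp: supp_def)
lemma e_carrier[simp]: "e b \<in> carrierV" by (simp add: carrierV_def)
lemma zero_carrier[simp]: "(\<lambda>_. 0) \<in> carrierV" by (simp add: carrierV_def supp_def)
lemma scal_carrier[simp]: "x \<in> carrierV \<Longrightarrow> scal k x \<in> carrierV"
  unfolding carrierV_def supp_def by (auto elim: finite_subset[rotated])
lemma addv_carrier[simp]: "x \<in> carrierV \<Longrightarrow> y \<in> carrierV \<Longrightarrow> x \<oplus> y \<in> carrierV"
proof -
  assume a: "x \<in> carrierV" "y \<in> carrierV"
  have "supp (x \<oplus> y) \<subseteq> supp x \<union> supp y" by (auto simp: supp_def)
  with a show ?thesis unfolding carrierV_def by (auto elim: finite_subset)
qed

lemma sum_carrier: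
  assumes "finite K" "\<And>i. i \<in> K \<Longrightarrow> f i \<in> carrierV"
  shows "(\<lambda>c. \<Sum>i\<in>K. k i * f i c) \<in> carrierV"
proof -
  have "supp (\<lambda>c. \<Sum>i\<in>K. k i * f i c) \<subseteq> (\<Union>i\<in>K. supp (f i))"
    by (auto simp: supp_def intro: ccontr dest: sum.neutral[rotated])
  moreover have "finite (\<Union>i\<in>K. supp (f i))" using assms by (auto simp: carrierV_def)
  ultimately show ?thesis unfolding carrierV_def by (auto elim: finite_subset)
qed

lemma supp_finite: "x \<in> carrierV \<Longrightarrow> finite (supp x)" by (simp add: carrierV_def)

lemma not_supp: "b \<notin> supp x \<Longrightarrow> x b = 0" by (simp add: supp_def)

lemma bracket_fin:
  assumes "finite S" "supp x \<subseteq> S" "finite T" "supp y \<subseteq> T"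
  shows "bracket lam x y c = (\<Sum>b1\<in>S. \<Sum>b2\<in>T. x b1 * y b2 * brb lam b1 b2 c)"
proof -
  have "(\<Sum>b1\<in>S. \<Sum>b2\<in>T. x b1 * y b2 * brb lam b1 b2 c) = (\<Sum>b1\<in>supp x. \<Sum>b2\<in>T. x b1 * y b2 * brb lam b1 b2 c)"
    by (rule sum.mono_neutral_right) (use assms in \<open>auto simp: supp_def\<close>)
  also have "\<dots> = (\<Sum>b1\<in>supp x. \<Sum>b2\<in>supp y. x b1 * y b2 * brb lam b1 b2 c)"
    by (rule sum.cong[OF refl], rule sum.mono_neutral_right) (use assms in \<open>auto simp: supp_def\<close>)
  finally show ?thesis by (simp add: bracket_def)
qed

lemma decomp:
  assumes "x \<in> carrierV" shows "x = (\<lambda>c. \<Sum>b\<in>supp x. x b * e b c)"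
proof
  fix c
  have "(\<Sum>b\<in>supp x. x b * e b c) = (\<Sum>b\<in>supp x. if c = b then x b else 0)"
    by (rule sum.cong) auto
  also have "\<dots> = x c" using assms by (simp add: supp_finite) (simp add: supp_def)
  finally show "x c = (\<Sum>b\<in>supp x. x b * e b c)" by simp
qed

lemma sum_ind:
  assumes "finite S" "supp x \<subseteq> S"
  shows "(\<Sum>b\<in>S. x b * (if b = b0 then k else 0)) = k * x b0"
proof -
  have "(\<Sum>b\<in>S. x b * (if b = b0 then k else 0)) = (\<Sum>b\<in>S. if b = b0 then x b * k else 0)"
    by (rule sum.cong) auto
  also have "\<dots> = (if b0 \<in> S then x b0 * k else 0)" using assms(1) by (simp add: sum.delta')
  also have "\<dots> = k * x b0" using assms(2) by (auto simp: supp_def)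
  finally show ?thesis .
qed

lemma bracket_sum_left:
  assumes "finite K" "\<And>i. i \<in> K \<Longrightarrow> f i \<in> carrierV" "y \<in> carrierV"
  shows "bracket lam (\<lambda>c. \<Sum>i\<in>K. k i * f i c) y c = (\<Sum>i\<in>K. k i * bracket lam (f i) y c)"
proof -
  define S where "S = (\<Union>i\<in>K. supp (f i))"
  have fS: "finite S" using assms by (auto simp: S_def carrierV_def)
  have sS: "supp (\<lambda>c. \<Sum>i\<in>K. k i * f i c) \<subseteq> S"
    by (auto simp: supp_def S_def intro: ccontr dest: sum.neutral[rotated])
  have "bracket lam (\<lambda>c. \<Sum>i\<in>K. k i * f i c) y c
     = (\<Sum>b1\<in>S. \<Sum>b2\<in>supp y. (\<Sum>i\<in>K. k i * f i b1) * y b2 * brb lam b1 b2 c)"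
    by (rule bracket_fin[OF fS sS]) (use assms in \<open>auto simp: supp_finite\<close>)
  also have "\<dots> = (\<Sum>i\<in>K. k i * (\<Sum>b1\<in>S. \<Sum>b2\<in>supp y. f i b1 * y b2 * brb lam b1 b2 c))"
    by (simp add: sum_distrib_left sum_distrib_right sum.swap[of _ K] mult.assoc)
  also have "\<dots> = (\<Sum>i\<in>K. k i * bracket lam (f i) y c)"
    by (rule sum.cong[OF refl], subst bracket_fin[OF fS _ _ order_refl])
       (use assms in \<open>auto simp: S_def supp_finite\<close>)
  finally show ?thesis .
qed

lemma bracket_sum_right:
  assumes "finite K" "\<And>i. i \<in> K \<Longrightarrow> f i \<in> carrierV" "x \<in> carrierV"
  shows "bracket lam x (\<lambda>c. \<Sum>i\<in>K. k i * f i c) c = (\<Sum>i\<in>K. k i * bracket lam x (f i) c)"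
proof -
  define S where "S = (\<Union>i\<in>K. supp (f i))"
  have fS: "finite S" using assms by (auto simp: S_def carrierV_def)
  have sS: "supp (\<lambda>c. \<Sum>i\<in>K. k i * f i c) \<subseteq> S"
    by (auto simp: supp_def S_def intro: ccontr dest: sum.neutral[rotated])
  have "bracket lam x (\<lambda>c. \<Sum>i\<in>K. k i * f i c) c
     = (\<Sum>b1\<in>supp x. \<Sum>b2\<in>S. x b1 * (\<Sum>i\<in>K. k i * f i b2) * brb lam b1 b2 c)"
    by (rule bracket_fin[OF _ _ fS sS]) (use assms in \<open>auto simp: supp_finite\<close>)
  also have "\<dots> = (\<Sum>i\<in>K. k i * (\<Sum>b1\<in>supp x. \<Sum>b2\<in>S. x b1 * f i b2 * brb lam b1 b2 c))"
    by (simp add: sum_distrib_left sum_distrib_right sum.swap[of _ K] mult.assoc mult.left_commute)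
  also have "\<dots> = (\<Sum>i\<in>K. k i * bracket lam x (f i) c)"
    by (rule sum.cong[OF refl], subst bracket_fin[OF _ order_refl fS])
       (use assms in \<open>auto simp: S_def supp_finite\<close>)
  finally show ?thesis .
qed

lemma bracket_e_e[simp]: "bracket lam (e b1) (e b2) = brb lam b1 b2"
  by (rule ext) (simp add: bracket_def)



lemma lin_add: "is_linear D \<Longrightarrow> x \<in> carrierV \<Longrightarrow> y \<in> carrierV \<Longrightarrow> D (x \<oplus> y) = D x \<oplus> D y"
  by (simp add: is_linear_def)
lemma lin_scal: "is_linear D \<Longrightarrow> x \<in> carrierV \<Longrightarrow> D (scal k x) = scal k (D x)"
  by (simp add: is_linear_def)
lemma lin_carrier: "is_linear D \<Longrightarrow> x \<in> carrierV \<Longrightarrow> D x \<in> carrierV"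
  by (simp add: is_linear_def)
lemma lin_zero: assumes "is_linear D" shows "D (\<lambda>_. 0) = (\<lambda>_. 0)"
proof -
  have "D (scal 0 (\<lambda>_. 0)) = scal 0 (D (\<lambda>_. 0))" using lin_scal[OF assms zero_carrier] .
  moreover have "scal 0 (\<lambda>_. 0) = (\<lambda>_. 0::complex)" by (rule ext) simp
  moreover have "scal 0 (D (\<lambda>_. 0)) = (\<lambda>_. 0)" by (rule ext) simp
  ultimately show ?thesis by simp
qed

lemma lin_sum:
  assumes D: "is_linear D" and "finite K"
  shows "(\<forall>i\<in>K. f i \<in> carrierV) \<longrightarrow> D (\<lambda>c. \<Sum>i\<in>K. k i * f i c) = (\<lambda>c. \<Sum>i\<in>K. k i * D (f i) c)"
  using assms(2)
proof (induction K rule: finite_induct)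
  case empty then show ?case using lin_zero[OF D] by simp
next
  case (insert j K)
  show ?case
  proof
    assume h: "\<forall>i\<in>insert j K. f i \<in> carrierV"
    have eq: "(\<lambda>c. \<Sum>i\<in>insert j K. k i * f i c) = scal (k j) (f j) \<oplus> (\<lambda>c. \<Sum>i\<in>K. k i * f i c)"
      using insert by (auto simp: fun_eq_iff)
    have c1: "(\<lambda>c. \<Sum>i\<in>K. k i * f i c) \<in> carrierV" using h insert by (intro sum_carrier) auto
    show "D (\<lambda>c. \<Sum>i\<in>insert j K. k i * f i c) = (\<lambda>c. \<Sum>i\<in>insert j K. k i * D (f i) c)"
      unfolding eq using h insert c1
      by (simp add: lin_add[OF D] lin_scal[OF D] fun_eq_iff)
  qed
qed

lemma lin_expand:
  assumes D: "is_linear D" and x: "x \<in> carrierV"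
  shows "D x = (\<lambda>c. \<Sum>b\<in>supp x. x b * D (e b) c)"
proof -
  have "D x = D (\<lambda>c. \<Sum>b\<in>supp x. x b * e b c)" using decomp[OF x] by simp
  also have "\<dots> = (\<lambda>c. \<Sum>b\<in>supp x. x b * D (e b) c)"
    using lin_sum[OF D supp_finite[OF x], where f=e and k=x] by (simp del: e_apply)
  finally show ?thesis .
qed

lemma lin_eq_basis:
  assumes "is_linear D" "is_linear D'" "\<And>b. D (e b) = D' (e b)" "x \<in> carrierV"
  shows "D x = D' x"
  using lin_expand[OF assms(1,4)] lin_expand[OF assms(2,4)] assms(3) by simp



definition Fop :: "complex \<Rightarrow> complex \<Rightarrow> complex \<Rightarrow> complex \<Rightarrow> complex \<Rightarrow> elt \<Rightarrow> elt" where
  "Fop lam a b c d y = (\<lambda>x. case x of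
      L n \<Rightarrow> - a * of_int n * y (L n)
    | I n \<Rightarrow> (2*d - a * of_int n) * y (I n) - b * of_int n * y (L n)
    | G p \<Rightarrow> (d - a * of_int p) * y (G p)
    | H p \<Rightarrow> (3*d - a * of_int p) * y (H p) + (a*lam - 2*b*of_int p + c) * y (G p))"

definition S4 :: "int \<Rightarrow> basis set" where "S4 k = {L k, I k, G k, H k}"

lemma S4_fin[simp]: "finite (S4 k)" by (simp add: S4_def)

lemma Fop_sum:
  "Fop lam a b c d (\<lambda>x. \<Sum>i\<in>K. k i * f i x) = (\<lambda>x. \<Sum>i\<in>K. k i * Fop lam a b c d (f i) x)"
  by (rule ext, simp add: Fop_def split: basis.split)
     (simp add: sum_distrib_left sum_negf sum_subtractf sum.distrib algebra_simps)


lemma Fop_nz: assumes that: "Fop lam a b c d x z \<noteq> 0" shows "\<exists>b0. x b0 \<noteq> 0 \<and> parity b0 = parity z \<and> idx b0 = idx z"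
proof (cases z)
  case (L n) then show ?thesis using that by (auto simp: Fop_def parity_def idx_def intro: exI[of _ "L n"])
next
  case (I n) then show ?thesis using that
    by (cases "x (I n) = 0") (auto simp: Fop_def parity_def idx_def intro: exI[of _ "L n"] exI[of _ "I n"])
next
  case (G n) then show ?thesis using that by (auto simp: Fop_def parity_def idx_def intro: exI[of _ "G n"])
next
  case (H n) then show ?thesis using that
    by (cases "x (H n) = 0") (auto simp: Fop_def parity_def idx_def intro: exI[of _ "G n"] exI[of _ "H n"])
qed

lemma in_S4: "z \<in> S4 (idx z)" by (cases z) (auto simp: S4_def idx_def)

lemma Fop_e_supp: "supp (Fop lam a b c d (e b0)) \<subseteq> S4 (idx b0)"
proof
  fix z assume "z \<in> supp (Fop lam a b c d (e b0))"
  then obtain b1 where "e b0 b1 \<noteq> 0" "idx b1 = idx z" using Fop_nz[of lam a b c d "e b0" z] by (auto simp: supp_def)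
  then show "z \<in> S4 (idx b0)" using in_S4[of z] by (auto split: if_splits)
qed

lemma Fop_e_carrier: "Fop lam a b c d (e b0) \<in> carrierV"
  using Fop_e_supp unfolding carrierV_def mem_Collect_eq by (rule finite_subset) simp

lemma Fop_expand: "x \<in> carrierV \<Longrightarrow> Fop lam a b c d x = (\<lambda>z. \<Sum>b0\<in>supp x. x b0 * Fop lam a b c d (e b0) z)"
proof -
  assume x: "x \<in> carrierV"
  have "Fop lam a b c d x = Fop lam a b c d (\<lambda>z. \<Sum>b0\<in>supp x. x b0 * e b0 z)"
    using decomp[OF x] by simp
  also have "\<dots> = (\<lambda>z. \<Sum>b0\<in>supp x. x b0 * Fop lam a b c d (e b0) z)"
    by (rule Fop_sum)
  finally show ?thesis .
qed

lemma Fop_linear: "is_linear (Fop lam a b c d)"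
  unfolding is_linear_def
proof (intro conjI ballI allI)
  fix x assume "x \<in> carrierV"
  then show "Fop lam a b c d x \<in> carrierV"
    by (subst Fop_expand) (auto intro!: sum_carrier Fop_e_carrier supp_finite)
next
  fix x y :: elt
  show "Fop lam a b c d (x \<oplus> y) = Fop lam a b c d x \<oplus> Fop lam a b c d y"
    by (rule ext) (simp add: Fop_def split: basis.split; simp add: algebra_simps)
next
  fix k x
  show "Fop lam a b c d (scal k x) = scal k (Fop lam a b c d x)"
    by (rule ext) (simp add: Fop_def split: basis.split; simp add: algebra_simps)
qed

lemma Fop_parity: "of_parity p x \<Longrightarrow> of_parity p (Fop lam a b c d x)"
  unfolding of_parity_def using Fop_nz by metis

lemma Fop_index: "of_index q x \<Longrightarrow> of_index q (Fop lam a b c d x)"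
  unfolding of_index_def using Fop_nz by metis



lemma Fop_der_basis:
  assumes "lam \<noteq> 0 \<longrightarrow> d = 0"
  shows "Fop lam a b c d (brb lam b1 b2) z = (\<Sum>bb\<in>S4 (idx b1). Fop lam a b c d (e b1) bb * brb lam bb b2 z)
     + (\<Sum>bb\<in>S4 (idx b2). Fop lam a b c d (e b2) bb * brb lam b1 bb z)"
  using assms
  apply (cases b1; cases b2; cases z)
  apply (simp_all add: Fop_def S4_def idx_def)
  apply (auto simp: field_simps)
  done



lemma e_carrier'[simp]: "(\<lambda>c. if c = b then 1 else 0) \<in> carrierV"
  using e_carrier[of b] by (simp add: e_def)

lemma bracket_left_S4:
  assumes "supp u \<subseteq> S4 (idx b1)"
  shows "bracket lam u (e b2) z = (\<Sum>bb\<in>S4 (idx b1). u bb * brb lam bb b2 z)"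
  by (subst bracket_fin[OF S4_fin assms, of "{b2}"]) auto

lemma bracket_right_S4:
  assumes "supp u \<subseteq> S4 (idx b2)"
  shows "bracket lam (e b1) u z = (\<Sum>bb\<in>S4 (idx b2). u bb * brb lam b1 bb z)"
  by (subst bracket_fin[OF _ _ S4_fin assms, of "{b1}"]) auto

lemma Fop_der_basis2:
  assumes "lam \<noteq> 0 \<longrightarrow> d = 0"
  shows "Fop lam a b c d (brb lam b1 b2) z = bracket lam (Fop lam a b c d (e b1)) (e b2) z
           + bracket lam (e b1) (Fop lam a b c d (e b2)) z"
  using Fop_der_basis[OF assms] by (simp add: bracket_left_S4[OF Fop_e_supp] bracket_right_S4[OF Fop_e_supp])

lemma Fop_der:
  assumes d: "lam \<noteq> 0 \<longrightarrow> d = 0" and x: "x \<in> carrierV" and y: "y \<in> carrierV"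
  shows "Fop lam a b c d (bracket lam x y) = bracket lam (Fop lam a b c d x) y \<oplus> bracket lam x (Fop lam a b c d y)"
proof (rule ext)
  fix z
  let ?F = "Fop lam a b c d"
  have bxy: "bracket lam x y = (\<lambda>c. \<Sum>b1\<in>supp x. x b1 * (\<lambda>c. \<Sum>b2\<in>supp y. y b2 * brb lam b1 b2 c) c)"
    by (simp add: bracket_def sum_distrib_left mult.assoc)
  have "?F (bracket lam x y) z = (\<Sum>b1\<in>supp x. x b1 * (\<Sum>b2\<in>supp y. y b2 * ?F (brb lam b1 b2) z))"
    unfolding bxy Fop_sum by simp
  also have "\<dots> = (\<Sum>b1\<in>supp x. x b1 * (\<Sum>b2\<in>supp y. y b2 * bracket lam (?F (e b1)) (e b2) z))
       + (\<Sum>b1\<in>supp x. x b1 * (\<Sum>b2\<in>supp y. y b2 * bracket lam (e b1) (?F (e b2)) z))"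
    by (simp add: Fop_der_basis2[OF d] ring_distribs sum.distrib)
  also have "(\<Sum>b1\<in>supp x. x b1 * (\<Sum>b2\<in>supp y. y b2 * bracket lam (?F (e b1)) (e b2) z))
       = bracket lam (?F x) y z"
  proof -
    have "bracket lam (?F x) y z = (\<Sum>b1\<in>supp x. x b1 * bracket lam (?F (e b1)) y z)"
      by (subst Fop_expand[OF x], rule bracket_sum_left) (auto simp: x y supp_finite Fop_e_carrier)
    also have "\<dots> = (\<Sum>b1\<in>supp x. x b1 * (\<Sum>b2\<in>supp y. y b2 * bracket lam (?F (e b1)) (e b2) z))"
    proof (rule sum.cong[OF refl])
      fix b1
      have "bracket lam (?F (e b1)) y z = bracket lam (?F (e b1)) (\<lambda>c. \<Sum>b2\<in>supp y. y b2 * e b2 c) z"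
        using decomp[OF y] by simp
      also have "\<dots> = (\<Sum>b2\<in>supp y. y b2 * bracket lam (?F (e b1)) (e b2) z)"
        by (rule bracket_sum_right) (auto simp: y supp_finite Fop_e_carrier)
      finally show "x b1 * bracket lam (?F (e b1)) y z = x b1 * (\<Sum>b2\<in>supp y. y b2 * bracket lam (?F (e b1)) (e b2) z)" by simp
    qed
    finally show ?thesis by simp
  qed
  also have "(\<Sum>b1\<in>supp x. x b1 * (\<Sum>b2\<in>supp y. y b2 * bracket lam (e b1) (?F (e b2)) z))
       = bracket lam x (?F y) z"
  proof -
    have "bracket lam x (?F y) z = bracket lam (\<lambda>c. \<Sum>b1\<in>supp x. x b1 * e b1 c) (?F y) z"
      using decomp[OF x] by simp
    also have "\<dots> = (\<Sum>b1\<in>supp x. x b1 * bracket lam (e b1) (?F y) z)"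
      by (rule bracket_sum_left) (auto simp: x supp_finite lin_carrier[OF Fop_linear y])
    also have "\<dots> = (\<Sum>b1\<in>supp x. x b1 * (\<Sum>b2\<in>supp y. y b2 * bracket lam (e b1) (?F (e b2)) z))"
    proof (rule sum.cong[OF refl])
      fix b1
      have "bracket lam (e b1) (?F y) z = (\<Sum>b2\<in>supp y. y b2 * bracket lam (e b1) (?F (e b2)) z)"
        by (subst Fop_expand[OF y], rule bracket_sum_right) (auto simp: y supp_finite Fop_e_carrier)
      then show "x b1 * bracket lam (e b1) (?F y) z = x b1 * (\<Sum>b2\<in>supp y. y b2 * bracket lam (e b1) (?F (e b2)) z)" by simp
    qed
    finally show ?thesis by simp
  qed
  finally show "?F (bracket lam x y) z = (bracket lam (?F x) y \<oplus> bracket lam x (?F y)) z" by simp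
qed



lemma brbL0: "brb lam (L 0) bb z = (case z of L n \<Rightarrow> (if bb = L n then - of_int n else 0)
   | I n \<Rightarrow> (if bb = I n then - of_int n else 0) | G p \<Rightarrow> (if bb = G p then - of_int p else 0)
   | H p \<Rightarrow> (if bb = H p then - of_int p else 0) + (if bb = G p then lam else 0))"
  by (cases bb; cases z) auto

lemma brbI0: "brb lam (I 0) bb z = (case z of L n \<Rightarrow> 0
   | I n \<Rightarrow> (if bb = L n then - of_int n else 0) | G p \<Rightarrow> 0
   | H p \<Rightarrow> (if bb = G p then - 2 * of_int p else 0))"
  by (cases bb; cases z) auto

lemma ad_sum: "ad lam (e b0) x z = (\<Sum>bb\<in>supp x. x bb * brb lam b0 bb z)"
  by (simp add: ad_def bracket_def)

lemma adL0: assumes "x \<in> carrierV"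
  shows "ad lam (e (L 0)) x z = (case z of L n \<Rightarrow> - of_int n * x (L n) | I n \<Rightarrow> - of_int n * x (I n)
    | G p \<Rightarrow> - of_int p * x (G p) | H p \<Rightarrow> - of_int p * x (H p) + lam * x (G p))"
  using supp_finite[OF assms]
  by (cases z) (simp_all add: ad_sum brbL0 sum_ind ring_distribs sum.distrib)

lemma adI0: assumes "x \<in> carrierV"
  shows "ad lam (e (I 0)) x z = (case z of L n \<Rightarrow> 0 | I n \<Rightarrow> - of_int n * x (L n)
    | G p \<Rightarrow> 0 | H p \<Rightarrow> - 2 * of_int p * x (G p))"
  using supp_finite[OF assms]
  by (cases z) (simp_all add: ad_sum brbI0 sum_ind)

lemma Fop_combo: assumes "x \<in> carrierV"
  shows "scal a (ad lam (e (L 0)) x) \<oplus> scal b (ad lam (e (I 0)) x) \<oplus> scal c (dG x) \<oplus> scal d (dD x)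
       = Fop lam a b c d x"
  by (rule ext, simp add: adL0[OF assms] adI0[OF assms] dG_def dD_def Fop_def split: basis.split)
     (simp add: algebra_simps)



lemma brb_supp: "supp (brb lam b1 b2) \<subseteq> S4 (idx b1 + idx b2)"
  by (cases b1; cases b2) (auto simp: supp_def S4_def idx_def split: if_splits)

lemma brb_carrier[simp]: "brb lam b1 b2 \<in> carrierV"
  using brb_supp unfolding carrierV_def mem_Collect_eq by (rule finite_subset) simp

lemma bracket_carrier: assumes "x \<in> carrierV" "y \<in> carrierV" shows "bracket lam x y \<in> carrierV"
proof -
  have bxy: "bracket lam x y = (\<lambda>c. \<Sum>b1\<in>supp x. x b1 * (\<lambda>c. \<Sum>b2\<in>supp y. y b2 * brb lam b1 b2 c) c)"
    by (simp add: bracket_def sum_distrib_left mult.assoc)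
  show ?thesis unfolding bxy using assms
    by (intro sum_carrier) (auto intro!: sum_carrier simp: supp_finite)
qed

lemma backward:
  assumes d: "lam \<noteq> 0 \<longrightarrow> d = 0" and DF: "\<forall>x\<in>carrierV. D x = Fop lam a b c d x"
  shows "even_superder lam D \<and> has_degree 0 D"
proof -
  let ?F = "Fop lam a b c d"
  have lin: "is_linear D" unfolding is_linear_def
    using DF Fop_linear[of lam a b c d] unfolding is_linear_def by simp
  have par: "\<forall>p x. x \<in> carrierV \<longrightarrow> of_parity p x \<longrightarrow> of_parity p (D x)"
    using DF Fop_parity by simp
  have der: "\<forall>x\<in>carrierV. \<forall>y\<in>carrierV. D (bracket lam x y) = bracket lam (D x) y \<oplus> bracket lam x (D y)"
    using DF Fop_der[OF d] bracket_carrier by simp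
  have deg: "has_degree 0 D" unfolding has_degree_def using DF Fop_index by simp
  show ?thesis using lin par der deg by (simp add: even_superder_def)
qed


lemma int_step:
  fixes g :: "int \<Rightarrow> complex"
  assumes "\<And>p. g (p + 1) = g p + k"
  shows "g p = g 0 + of_int p * k"
proof (induction p rule: int_induct[where k=0])
  case base then show ?case by simp
next
  case (step1 i) then show ?case using assms[of i] by (simp add: algebra_simps)
next
  case (step2 i)
  have "g i = g (i - 1) + k" using assms[of "i - 1"] by simp
  with step2 show ?case by (simp add: algebra_simps)
qed
lemma witt:
  fixes f :: "int \<Rightarrow> complex"
  assumes h: "\<And>m n. of_int (m - n) * f (m + n) = of_int (m - n) * (f m + f n)"
  shows "f m = of_int m * f 1"
proof -
  have h': "f (m + n) = f m + f n" if "m \<noteq> n" for m n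
  proof -
    have "(of_int (m - n) :: complex) \<noteq> 0" using that by simp
    then show ?thesis using h[of m n] by (simp only: mult_cancel_left) simp
  qed
  have f0: "f 0 = 0" using h'[of 1 0] by simp
  have a1: "f 3 = f 2 + f 1" using h'[of 2 1] by simp
  have a2: "f 4 = f 3 + f 1" using h'[of 3 1] by simp
  have a3: "f 2 = f 4 + f (-2)" using h'[of 4 "-2"] by simp
  have a4: "f 0 = f 2 + f (-2)" using h'[of 2 "-2"] by simp
  have f2: "f 2 = 2 * f 1"
  proof -
    have "f (-2) = - f 2" using a4 f0 by (simp add: eq_neg_iff_add_eq_0 add.commute)
    then have "f 2 = f 4 - f 2" using a3 by simp
    also have "\<dots> = f 2 + 2 * f 1 - f 2" using a1 a2 by simp
    finally show ?thesis by simp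
  qed
  have st: "f (p + 1) = f p + f 1" for p
  proof (cases "p = 1")
    case True then show ?thesis using f2 by simp
  next
    case False then show ?thesis using h'[of p 1] by simp
  qed
  have "f m = f 0 + of_int m * f 1" by (rule int_step[where g=f and k="f 1", OF st])
  then show ?thesis using f0 by simp
qed

lemma cancel_int: "(of_int k :: complex) * x = of_int k * y \<Longrightarrow> k \<noteq> 0 \<Longrightarrow> x = y"
  by simp

lemma algebra_solve:
  fixes A B C Dl Eg Z Et Th :: "int \<Rightarrow> complex"
  assumes E1: "\<And>m n. of_int (m - n) * A (m + n) = of_int (m - n) * (A m + A n)"
    and E2: "\<And>m n. of_int (m - n) * B (m + n) = of_int (m - n) * (B m + B n)"
    and E3: "\<And>m n. of_int (m - n) * (C m + C n) = 0"
    and E4: "\<And>m n. of_int (m - n) * Dl (m + n) = of_int (m - n) * (A m + Dl n)"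
    and E5: "\<And>p q. Dl (p + q) = Eg p + Eg q"
    and E6: "\<And>m p. of_int (m - 2*p) * Et (m + p) = C m * (of_int m / 2 - of_int p)"
    and E7: "\<And>m p. of_int (m - 2*p) * Th (m + p) = C m * (lam * (of_int m + 1)) + of_int (m - 2*p) * (Dl m + Eg p)"
    and E8: "\<And>m p. (of_int m / 2 - of_int p) * Z (m + p) + lam * (of_int m + 1) * Th (m + p)
              = A m * (lam * (of_int m + 1)) + B m * of_int (m - 2*p) + Eg p * (lam * (of_int m + 1))
                + Z p * (of_int m / 2 - of_int p)"
  shows "A m = of_int m * A 1" "B m = of_int m * B 1" "C m = 0" "Dl m = Dl 0 + of_int m * A 1"
    "Eg m = Dl 0 / 2 + of_int m * A 1" "Z m = Z 0 + 2 * of_int m * B 1" "Et m = 0"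
    "Th m = 3 * Dl 0 / 2 + of_int m * A 1" "lam * Dl 0 = 0"
proof -
  have Aw: "\<And>m. A m = of_int m * A 1" using witt E1 by blast
  have Bw: "\<And>m. B m = of_int m * B 1" using witt E2 by blast
  have C': "C m + C n = 0" if "m \<noteq> n" for m n using E3[of m n] that by simp
  have C0: "\<And>m. C m = 0"
  proof -
    fix m
    have "C m + C (m+1) = 0" "C (m+1) + C (m+2) = 0" "C m + C (m+2) = 0"
      using C'[of m "m+1"] C'[of "m+1" "m+2"] C'[of m "m+2"] by auto
    then have "C m = - C (m+1)" "C (m+2) = - C (m+1)" "C m + C (m+2) = 0"
      by (simp_all add: eq_neg_iff_add_eq_0 add.commute)
    then have "2 * C m = 0" by simp
    then show "C m = 0" by simp
  qed
  have Dw: "\<And>m. Dl m = Dl 0 + of_int m * A 1"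
  proof -
    fix m show "Dl m = Dl 0 + of_int m * A 1"
    proof (cases "m = 0")
      case False
      have "of_int m * Dl m = of_int m * (A m + Dl 0)" using E4[of m 0] by simp
      then have "Dl m = A m + Dl 0" using False by (rule cancel_int)
      then show ?thesis using Aw[of m] by simp
    qed simp
  qed
  have Egw: "\<And>p. Eg p = Dl 0 / 2 + of_int p * A 1"
  proof -
    fix p
    have "2 * Eg p = Dl 0 + 2 * of_int p * A 1" using E5[of p p] Dw[of "p+p"] by simp
    then show "Eg p = Dl 0 / 2 + of_int p * A 1" by (simp add: field_simps)
  qed
  have Etw: "\<And>k. Et k = 0"
  proof -
    fix k show "Et k = 0"
    proof (cases "k = 0")
      case True then show ?thesis using E6[of "-1" 1] C0 by simp
    next
      case False then show ?thesis using E6[of k 0] C0 by simp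
    qed
  qed
  have Thw: "\<And>k. Th k = 3 * Dl 0 / 2 + of_int k * A 1"
  proof -
    fix k show "Th k = 3 * Dl 0 / 2 + of_int k * A 1"
    proof (cases "k = 0")
      case True
      have "of_int 6 * Th 0 = of_int 6 * (Dl 2 + Eg (-2))" using E7[of 2 "-2"] C0 by simp
      then have "Th 0 = Dl 2 + Eg (-2)" by (rule cancel_int) simp
      also have "\<dots> = 3 * Dl 0 / 2" using Dw[of 2] Egw[of "-2"] by (simp add: field_simps)
      finally show ?thesis using True by simp
    next
      case False
      have "of_int k * Th k = of_int k * (Dl k + Eg 0)" using E7[of k 0] C0 by simp
      then have "Th k = Dl k + Eg 0" using False by (rule cancel_int)
      then show ?thesis using Dw[of k] Egw[of 0] by (simp add: field_simps)
    qed
  qed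
  have Zst: "\<And>p. Z (p + 1) = Z p + 2 * B 1"
  proof -
    fix p
    define X :: complex where "X = - 1 / 2 - of_int (p+1)"
    have ne: "X \<noteq> 0"
    proof
      assume "X = 0"
      then have "(2 * of_int (p+1) + 1 :: complex) = 0" unfolding X_def by (simp add: field_simps)
      then have "(of_int (2 * (p+1) + 1) :: complex) = 0" by simp
      then have "2 * (p+1) + 1 = 0" by (simp only: of_int_eq_0_iff)
      then show False by presburger
    qed
    have Y: "(of_int (-1 - 2*(p+1)) :: complex) = 2 * X" unfolding X_def by simp
    have "X * Z p = B (-1) * of_int (-1 - 2*(p+1)) + Z (p+1) * X"
      using E8[of "-1" "p+1"] unfolding X_def by simp
    then have "X * Z p = B (-1) * (2 * X) + Z (p+1) * X" unfolding Y .
    then have "X * (Z p - 2 * B (-1) - Z (p+1)) = 0" by (simp add: algebra_simps)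
    then have "Z p - 2 * B (-1) - Z (p+1) = 0" using ne by simp
    then show "Z (p + 1) = Z p + 2 * B 1" using Bw[of "-1"] by (simp add: algebra_simps)
  qed
  have Zw: "\<And>m. Z m = Z 0 + 2 * of_int m * B 1"
  proof -
    fix m
    have "Z m = Z 0 + of_int m * (2 * B 1)" by (rule int_step[where g=Z and k="2 * B 1", OF Zst])
    then show "Z m = Z 0 + 2 * of_int m * B 1" by simp
  qed
  have lamD: "lam * Dl 0 = 0"
  proof -
    have "lam * Th 0 = lam * Eg 0" using E8[of 0 0] Aw[of 0] by simp
    then have "lam * (3 * Dl 0 / 2) = lam * (Dl 0 / 2)" using Thw[of 0] Egw[of 0] by simp
    then show ?thesis by (simp add: field_simps)
  qed
  show "A m = of_int m * A 1" "B m = of_int m * B 1" "C m = 0" "Dl m = Dl 0 + of_int m * A 1"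
    "Eg m = Dl 0 / 2 + of_int m * A 1" "Z m = Z 0 + 2 * of_int m * B 1" "Et m = 0"
    "Th m = 3 * Dl 0 / 2 + of_int m * A 1" "lam * Dl 0 = 0"
    by (rule Aw, rule Bw, rule C0, rule Dw, rule Egw, rule Zw, rule Etw, rule Thw, rule lamD)
qed


lemma forward:
  assumes es: "even_superder lam D" and hd: "has_degree 0 D"
  shows "\<exists>a b c d. (lam \<noteq> 0 \<longrightarrow> d = 0) \<and> (\<forall>x\<in>carrierV. D x = Fop lam a b c d x)"
proof -
  have lin: "is_linear D" using es by (simp add: even_superder_def)
  have der: "\<And>x y. x \<in> carrierV \<Longrightarrow> y \<in> carrierV \<Longrightarrow> D (bracket lam x y) = bracket lam (D x) y \<oplus> bracket lam x (D y)"
    using es by (simp add: even_superder_def)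
  have par_zero: "D (e b) z = 0" if "parity z \<noteq> parity b" for b z
  proof -
    have "of_parity (parity b) (e b)" by (simp add: of_parity_def)
    then have "of_parity (parity b) (D (e b))" using es by (simp add: even_superder_def)
    then show ?thesis using that by (auto simp: of_parity_def)
  qed
  have idx_zero: "D (e b) z = 0" if "idx z \<noteq> idx b" for b z
  proof -
    have "of_index (idx b) (e b)" by (simp add: of_index_def)
    then have "of_index (idx b) (D (e b))" using hd by (simp add: has_degree_def)
    then show ?thesis using that by (auto simp: of_index_def)
  qed
  have suppD: "supp (D (e b)) \<subseteq> S4 (idx b)" for b
    using idx_zero in_S4 by (auto simp: supp_def) (metis)
  have bder: "D (brb lam b1 b2) z = (\<Sum>bb\<in>S4 (idx b1). D (e b1) bb * brb lam bb b2 z)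
     + (\<Sum>bb\<in>S4 (idx b2). D (e b2) bb * brb lam b1 bb z)" for b1 b2 z
    using der[OF e_carrier e_carrier, of b1 b2]
    by (simp add: bracket_left_S4[OF suppD] bracket_right_S4[OF suppD])
  have z1: "D (e (L m)) (G p) = 0" "D (e (L m)) (H p) = 0" "D (e (I m)) (G p) = 0" "D (e (I m)) (H p) = 0"
    "D (e (G m)) (L p) = 0" "D (e (G m)) (I p) = 0" "D (e (H m)) (L p) = 0" "D (e (H m)) (I p) = 0" for m p
    by (rule par_zero, simp add: parity_def)+
  note Ds = lin_scal[OF lin] lin_add[OF lin] lin_zero[OF lin]
  define A where "A m = D (e (L m)) (L m)" for m
  define B where "B m = D (e (L m)) (I m)" for m
  define C where "C m = D (e (I m)) (L m)" for m
  define Dl where "Dl m = D (e (I m)) (I m)" for m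
  define Eg where "Eg m = D (e (G m)) (G m)" for m
  define Z where "Z m = D (e (G m)) (H m)" for m
  define Et where "Et m = D (e (H m)) (G m)" for m
  define Th where "Th m = D (e (H m)) (H m)" for m
  have E1: "of_int (m - n) * A (m + n) = of_int (m - n) * (A m + A n)" for m n
    using bder[of "L m" "L n" "L (m + n)"] by (simp add: A_def S4_def idx_def Ds z1 algebra_simps)
  have E2: "of_int (m - n) * B (m + n) = of_int (m - n) * (B m + B n)" for m n
    using bder[of "L m" "L n" "I (m + n)"] by (simp add: B_def S4_def idx_def Ds z1 algebra_simps)
  have E3: "of_int (m - n) * (C m + C n) = 0" for m n
    using bder[of "I m" "I n" "I (m + n)"] by (simp add: C_def S4_def idx_def Ds z1 algebra_simps)
  have E4: "of_int (m - n) * Dl (m + n) = of_int (m - n) * (A m + Dl n)" for m n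
    using bder[of "L m" "I n" "I (m + n)"] by (simp add: A_def Dl_def S4_def idx_def Ds z1 algebra_simps)
  have E5: "Dl (p + q) = Eg p + Eg q" for p q
    using bder[of "G p" "G q" "I (p + q)"] by (simp add: Eg_def Dl_def S4_def idx_def Ds z1 algebra_simps)
  have E6: "of_int (m - 2*p) * Et (m + p) = C m * (of_int m / 2 - of_int p)" for m p
    using bder[of "I m" "G p" "G (m + p)"] by (simp add: Et_def C_def S4_def idx_def Ds z1 algebra_simps)
  have E7: "of_int (m - 2*p) * Th (m + p) = C m * (lam * (of_int m + 1)) + of_int (m - 2*p) * (Dl m + Eg p)" for m p
    using bder[of "I m" "G p" "H (m + p)"] by (simp add: Th_def C_def Dl_def Eg_def S4_def idx_def Ds z1 algebra_simps)
  have E8: "(of_int m / 2 - of_int p) * Z (m + p) + lam * (of_int m + 1) * Th (m + p)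
              = A m * (lam * (of_int m + 1)) + B m * of_int (m - 2*p) + Eg p * (lam * (of_int m + 1))
                + Z p * (of_int m / 2 - of_int p)" for m p
    using bder[of "L m" "G p" "H (m + p)"] by (simp add: A_def B_def Z_def Th_def Eg_def S4_def idx_def Ds z1 algebra_simps)
  note sol = algebra_solve[OF E1 E2 E3 E4 E5 E6 E7 E8]
  obtain al be de ze where
    vA: "\<And>m. A m = of_int m * al" and vB: "\<And>m. B m = of_int m * be" and vC: "\<And>m. C m = 0"
    and vD: "\<And>m. Dl m = de + of_int m * al" and vEg: "\<And>m. Eg m = de / 2 + of_int m * al"
    and vZ: "\<And>m. Z m = ze + 2 * of_int m * be" and vEt: "\<And>m. Et m = 0"
    and vTh: "\<And>m. Th m = 3 * de / 2 + of_int m * al" and vl: "lam * de = 0"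
    using sol by blast
  define a where "a = - al"
  define b where "b = - be"
  define c where "c = ze + lam * al"
  define d where "d = de / 2"
  have dz: "lam \<noteq> 0 \<longrightarrow> d = 0" using vl by (auto simp: d_def)
  have basis: "D (e b0) = Fop lam a b c d (e b0)" for b0
  proof (rule ext)
    fix z
    show "D (e b0) z = Fop lam a b c d (e b0) z"
    proof (cases "idx z = idx b0")
      case False
      have "z \<notin> S4 (idx b0)" using False by (auto simp: S4_def idx_def)
      then have "Fop lam a b c d (e b0) z = 0" using Fop_e_supp[of lam a b c d b0] by (auto simp: supp_def)
      then show ?thesis using idx_zero[OF False] by simp
    next
      case True
      then show ?thesis
        apply (cases b0; cases z)
        apply (simp_all add: idx_def Fop_def z1 a_def b_def c_def d_def
             flip: A_def B_def C_def Dl_def Eg_def Z_def Et_def Th_def)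
        apply (simp_all add: vA vB vC vD vEg vZ vEt vTh field_simps)
        done
    qed
  qed
  have "\<forall>x\<in>carrierV. D x = Fop lam a b c d x"
    using lin_eq_basis[OF lin Fop_linear basis] by blast
  then show ?thesis using dz by blast
qed



theorem lemma2p3:
  fixes lam :: complex
  shows "(\<forall>D. (even_superder lam D \<and> has_degree 0 D) \<longleftrightarrow>
            (\<exists>a b c d. (lam \<noteq> 0 \<longrightarrow> d = 0) \<and>
               (\<forall>x\<in>carrierV. D x = scal a (ad lam (e (L 0)) x) \<oplus> scal b (ad lam (e (I 0)) x)
                                    \<oplus> scal c (dG x) \<oplus> scal d (dD x))))
       \<and> (\<forall>a b c d. (lam \<noteq> 0 \<longrightarrow> d = 0) \<longrightarrow>
            (\<forall>x\<in>carrierV. scal a (ad lam (e (L 0)) x) \<oplus> scal b (ad lam (e (I 0)) x)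
                           \<oplus> scal c (dG x) \<oplus> scal d (dD x) = (\<lambda>_. 0)) \<longrightarrow>
            a = 0 \<and> b = 0 \<and> c = 0 \<and> d = 0)"
proof (rule conjI; (intro allI impI iffI)?)
  fix D assume H: "even_superder lam D \<and> has_degree 0 D"
  have "\<exists>a b c d. (lam \<noteq> 0 \<longrightarrow> d = 0) \<and> (\<forall>x\<in>carrierV. D x = Fop lam a b c d x)"
    by (rule forward[OF conjunct1[OF H] conjunct2[OF H]])
  then obtain a b c d where hf: "lam \<noteq> 0 \<longrightarrow> d = 0" "\<forall>x\<in>carrierV. D x = Fop lam a b c d x"
    by (elim exE conjE)
  show "\<exists>a b c d. (lam \<noteq> 0 \<longrightarrow> d = 0) \<and>
               (\<forall>x\<in>carrierV. D x = scal a (ad lam (e (L 0)) x) \<oplus> scal b (ad lam (e (I 0)) x)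
                                    \<oplus> scal c (dG x) \<oplus> scal d (dD x))"
  proof (intro exI conjI)
    show "\<forall>x\<in>carrierV. D x = scal a (ad lam (e (L 0)) x) \<oplus> scal b (ad lam (e (I 0)) x)
                                    \<oplus> scal c (dG x) \<oplus> scal d (dD x)"
      using hf Fop_combo by simp
  qed (use hf in simp)
next
  fix D assume "\<exists>a b c d. (lam \<noteq> 0 \<longrightarrow> d = 0) \<and>
               (\<forall>x\<in>carrierV. D x = scal a (ad lam (e (L 0)) x) \<oplus> scal b (ad lam (e (I 0)) x)
                                    \<oplus> scal c (dG x) \<oplus> scal d (dD x))"
  then obtain a b c d where h: "lam \<noteq> 0 \<longrightarrow> d = 0" "\<forall>x\<in>carrierV. D x = scal a (ad lam (e (L 0)) x) \<oplus> scal b (ad lam (e (I 0)) x)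
                                    \<oplus> scal c (dG x) \<oplus> scal d (dD x)"
    by (elim exE conjE)
  have h2: "\<forall>x\<in>carrierV. D x = Fop lam a b c d x" using h(2) Fop_combo by simp
  show "even_superder lam D \<and> has_degree 0 D" by (rule backward[OF h(1) h2])
next
  fix a b c d
  assume "\<forall>x\<in>carrierV. scal a (ad lam (e (L 0)) x) \<oplus> scal b (ad lam (e (I 0)) x)
                           \<oplus> scal c (dG x) \<oplus> scal d (dD x) = (\<lambda>_. 0)"
  then have z: "\<And>x. x \<in> carrierV \<Longrightarrow> Fop lam a b c d x = (\<lambda>_. 0)" using Fop_combo by simp
  have 1: "Fop lam a b c d (e (L 1)) (L 1) = 0" "Fop lam a b c d (e (L 1)) (I 1) = 0"
    "Fop lam a b c d (e (G 0)) (G 0) = 0" "Fop lam a b c d (e (G 0)) (H 0) = 0"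
    by (simp_all add: z)
  then show "a = 0 \<and> b = 0 \<and> c = 0 \<and> d = 0" by (simp add: Fop_def)
qed


end
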